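(* Consider the amortized variant of the algorithmic framework described below with parameters $\eta=1$, $\gamma\in(0,1)$ and $\xi=\gamma^{-1}+\tfrac12$. Then the framework maintains $\ell_i\le(1+\eta)T\,(=2T)$ for every machine $i$, where $\ell_i=\sum_{j\in \hat J_i\cup\check J_i}p_j/s_i$ is the total load of machine $i$ and $T$ is the current guess.
   Context: Problem: machines $1,\dots,m$ with speeds $s_1\ge s_2\ge\dots\ge s_m>0$; jobs arrive online, job $j$ has size $p_j>0$; the load of job $j$ on machine $i$ is $p_j/s_i$. Framework (amortized variant): it keeps a guess $T$, for each machine $i$ a partition of its jobs into old jobs $\hat J_i$ and new jobs $\check J_i$, and a potential $\pi_i$ per machine. Machine $i$ is saturated if $\check\ell_i:=\sum_{j\in\check J_i}p_j/s_i\ge T$, and $\eta$-eligible for job $j$ if $p_j/s_i\le \eta T$. Let $\tilde{\mathcal M}(\eta,j)$ be the set of machines that are $\eta$-eligible for $j$ and not saturated. When the first job $j_1$ arrives, set $T=p_{j_1}/s_1$ and place $j_1$ on machine 1. When a later job $j^*$ arrives, put it into a priority queue $Q$ (larger size = higher priority) and run: while $Q$ is nonempty, remove the largest job $j'$ from $Q$; then repeat: if $\tilde{\mathcal M}(\eta,j')\ne\emptyset$, choose a slowest machine $i'$ in it, move every $j\in\hat J_{i'}$ with $p_j\ge \eta^{-1}p_{j'}$ from $\hat J_{i'}$ to $\check J_{i'}$, and if $i'$ is still not saturated stop repeating; otherwise set $T:=\xi T$ and for every machine $i$ move all jobs of $\check J_i$ to $\hat J_i$ and set $\pi_i=0$.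 After a machine $i'$ is found, set $\pi:=\gamma p_{j'}+\pi_{i'}$; go through the jobs $j\in\hat J_{i'}$ in non-increasing order of size and, whenever $p_j\le\pi$, set $\pi:=\pi-p_j$ and move $j$ from $\hat J_{i'}$ into $Q$ (removing it from $i'$). Finally add $j'$ to $\check J_{i'}$ and set $\pi_{i'}:=\pi$. *)

theory Defs
  imports Complex_Main
begin

(* Machines are indexed 0..<m (machine 1 of the paper is index 0), speeds s,
   job identifiers are natural numbers with sizes p. *)

datatype phase = Idle | Search nat | Place nat nat

record st =
  T :: real
  hatJ :: "nat \<Rightarrow> nat set"     (* old jobs of each machine *)
  chkJ :: "nat \<Rightarrow> nat set"     (* new jobs of each machine *)
  pot :: "nat \<Rightarrow> real"
  queue :: "nat set"
  arrived :: "nat set"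
  ph :: phase

definition new_load :: "(nat \<Rightarrow> real) \<Rightarrow> (nat \<Rightarrow> real) \<Rightarrow> st \<Rightarrow> nat \<Rightarrow> real" where
  "new_load s p \<sigma> i = (\<Sum>j\<in>chkJ \<sigma> i. p j) / s i"

definition total_load :: "(nat \<Rightarrow> real) \<Rightarrow> (nat \<Rightarrow> real) \<Rightarrow> st \<Rightarrow> nat \<Rightarrow> real" where
  "total_load s p \<sigma> i = (\<Sum>j\<in>hatJ \<sigma> i \<union> chkJ \<sigma> i. p j) / s i"

definition saturated :: "(nat \<Rightarrow> real) \<Rightarrow> (nat \<Rightarrow> real) \<Rightarrow> st \<Rightarrow> nat \<Rightarrow> bool" where
  "saturated s p \<sigma> i \<longleftrightarrow> new_load s p \<sigma> i \<ge> T \<sigma>"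

definition eligible :: "(nat \<Rightarrow> real) \<Rightarrow> (nat \<Rightarrow> real) \<Rightarrow> real \<Rightarrow> st \<Rightarrow> nat \<Rightarrow> nat \<Rightarrow> bool" where
  "eligible s p eta \<sigma> j i \<longleftrightarrow> p j / s i \<le> eta * T \<sigma>"

definition Mt :: "nat \<Rightarrow> (nat \<Rightarrow> real) \<Rightarrow> (nat \<Rightarrow> real) \<Rightarrow> real \<Rightarrow> st \<Rightarrow> nat \<Rightarrow> nat set" where
  "Mt m s p eta \<sigma> j = {i. i < m \<and> eligible s p eta \<sigma> j i \<and> \<not> saturated s p \<sigma> i}"

fun greedy :: "(nat \<Rightarrow> real) \<Rightarrow> real \<Rightarrow> nat list \<Rightarrow> nat set \<times> real" where
  "greedy p \<pi> [] = ({}, \<pi>)"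
| "greedy p \<pi> (j # js) =
     (if p j \<le> \<pi> then (let (R, \<pi>') = greedy p (\<pi> - p j) js in (insert j R, \<pi>'))
      else greedy p \<pi> js)"

definition init_st :: st where
  "init_st = \<lparr>T = 0, hatJ = (\<lambda>_. {}), chkJ = (\<lambda>_. {}), pot = (\<lambda>_. 0),
              queue = {}, arrived = {}, ph = Idle\<rparr>"

definition move_step :: "(nat \<Rightarrow> real) \<Rightarrow> real \<Rightarrow> st \<Rightarrow> nat \<Rightarrow> nat \<Rightarrow> st" where
  "move_step p eta \<sigma> j i =
     \<sigma>\<lparr>hatJ := (hatJ \<sigma>)(i := {k \<in> hatJ \<sigma> i. \<not> (p k \<ge> p j / eta)}),
       chkJ := (chkJ \<sigma>)(i := chkJ \<sigma> i \<union> {k \<in> hatJ \<sigma> i. p k \<ge> p j / eta})\<rparr>"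

(* All states reachable by the (amortized variant of the) framework, for every
   online input sequence and every resolution of ties. *)
inductive reach :: "nat \<Rightarrow> (nat \<Rightarrow> real) \<Rightarrow> (nat \<Rightarrow> real) \<Rightarrow> real \<Rightarrow> real \<Rightarrow> real \<Rightarrow> st \<Rightarrow> bool"
  for m s p eta gamma xi where
  init: "reach m s p eta gamma xi init_st"
| first: "\<lbrakk> reach m s p eta gamma xi \<sigma>; arrived \<sigma> = {}; ph \<sigma> = Idle \<rbrakk> \<Longrightarrow>
     reach m s p eta gamma xi (\<sigma>\<lparr>T := p j / s 0, chkJ := (chkJ \<sigma>)(0 := insert j (chkJ \<sigma> 0)),
                                 arrived := {j}\<rparr>)"
| arrive: "\<lbrakk> reach m s p eta gamma xi \<sigma>; arrived \<sigma> \<noteq> {}; j \<notin> arrived \<sigma>; ph \<sigma> = Idle;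
            queue \<sigma> = {} \<rbrakk> \<Longrightarrow>
     reach m s p eta gamma xi (\<sigma>\<lparr>queue := {j}, arrived := insert j (arrived \<sigma>)\<rparr>)"
| pop: "\<lbrakk> reach m s p eta gamma xi \<sigma>; ph \<sigma> = Idle; j \<in> queue \<sigma>; \<forall>k\<in>queue \<sigma>. p k \<le> p j \<rbrakk> \<Longrightarrow>
     reach m s p eta gamma xi (\<sigma>\<lparr>queue := queue \<sigma> - {j}, ph := Search j\<rparr>)"
| move: "\<lbrakk> reach m s p eta gamma xi \<sigma>; ph \<sigma> = Search j; i \<in> Mt m s p eta \<sigma> j;
          \<forall>k\<in>Mt m s p eta \<sigma> j. s i \<le> s k \<rbrakk> \<Longrightarrow>
     reach m s p eta gamma xi
       (if saturated s p (move_step p eta \<sigma> j i) i then move_step p eta \<sigma> j i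
        else (move_step p eta \<sigma> j i)\<lparr>ph := Place j i\<rparr>)"
| raise: "\<lbrakk> reach m s p eta gamma xi \<sigma>; ph \<sigma> = Search j; Mt m s p eta \<sigma> j = {} \<rbrakk> \<Longrightarrow>
     reach m s p eta gamma xi (\<sigma>\<lparr>T := xi * T \<sigma>, hatJ := (\<lambda>i. hatJ \<sigma> i \<union> chkJ \<sigma> i),
                                 chkJ := (\<lambda>_. {}), pot := (\<lambda>_. 0)\<rparr>)"
| place: "\<lbrakk> reach m s p eta gamma xi \<sigma>; ph \<sigma> = Place j i; distinct xs; set xs = hatJ \<sigma> i;
           sorted_wrt (\<lambda>a b. p b \<le> p a) xs; greedy p (gamma * p j + pot \<sigma> i) xs = (R, \<pi>) \<rbrakk> \<Longrightarrow>
     reach m s p eta gamma xi (\<sigma>\<lparr>hatJ := (hatJ \<sigma>)(i := hatJ \<sigma> i - R),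
                                 chkJ := (chkJ \<sigma>)(i := insert j (chkJ \<sigma> i)),
                                 pot := (pot \<sigma>)(i := \<pi>), queue := queue \<sigma> \<union> R, ph := Idle\<rparr>)"

end

theory Submission
  imports Defs
begin

lemma greedy_props:
  assumes "\<forall>k. p k > 0"
  shows "distinct xs \<Longrightarrow> greedy p b xs = (R, b') \<Longrightarrow>
    R \<subseteq> set xs \<and> sum p R + b' = b \<and> b' \<le> b \<and> (b \<ge> 0 \<longrightarrow> b' \<ge> 0) \<and> (\<forall>k \<in> set xs - R. b' < p k)"
proof (induction xs arbitrary: b R b')
  case Nil
  then show ?case by simp
next
  case (Cons j js)
  show ?case
  proof (cases "p j \<le> b")
    case True
    obtain R0 c where g0: "greedy p (b - p j) js = (R0, c)" by (metis prod.exhaust)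
    with Cons.prems True have R: "R = insert j R0" "b' = c" by auto
    from Cons.IH[OF _ g0] Cons.prems have IH: "R0 \<subseteq> set js \<and> sum p R0 + c = b - p j \<and> c \<le> b - p j \<and>
      (b - p j \<ge> 0 \<longrightarrow> c \<ge> 0) \<and> (\<forall>k \<in> set js - R0. c < p k)" by auto
    have jn: "j \<notin> R0" using IH Cons.prems by auto
    have "sum p R = p j + sum p R0" using R jn IH by (metis List.finite_set finite_subset sum.insert)
    moreover have "p j > 0" using assms by auto
    ultimately show ?thesis using IH R True by auto
  next
    case False
    with Cons.prems have g0: "greedy p b js = (R, b')" by simp
    from Cons.IH[OF _ g0] Cons.prems have IH: "R \<subseteq> set js \<and> sum p R + b' = b \<and> b' \<le> b \<and>
      (b \<ge> 0 \<longrightarrow> b' \<ge> 0) \<and> (\<forall>k \<in> set js - R. b' < p k)" by auto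
    then show ?thesis using False by auto
  qed
qed

definition minv :: "(nat \<Rightarrow> real) \<Rightarrow> real \<Rightarrow> real \<Rightarrow> real \<Rightarrow> real \<Rightarrow> nat set \<Rightarrow> nat set \<Rightarrow> real \<Rightarrow> bool" where
  "minv p g x si t H C w \<longleftrightarrow> w \<ge> 0 \<and> g * sum p C + sum p H - w \<le> 2*t*si/x
     \<and> (\<forall>k\<in>H. w < p k \<and> p k \<le> t*si/x) \<and> (\<forall>k\<in>C. p k \<le> t*si) \<and> sum p H + sum p C \<le> 2*t*si"

lemma minv_move:
  assumes "minv p g x si t H C w" "finite H" "finite C" "H \<inter> C = {}" "si > 0" "t \<ge> 0" "x \<ge> 1"
    "0 < g" "g < 1" "\<forall>k. p k > 0"
  shows "minv p g x si t {k\<in>H. \<not> q \<le> p k} (C \<union> {k\<in>H. q \<le> p k}) w"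
proof -
  let ?K = "{k\<in>H. q \<le> p k}" let ?H' = "{k\<in>H. \<not> q \<le> p k}"
  have sH: "sum p H = sum p ?H' + sum p ?K"
    using assms(2) by (subst sum.union_disjoint[symmetric]) (auto intro: sum.cong)
  have sC: "sum p (C \<union> ?K) = sum p C + sum p ?K"
    using assms(2-4) by (subst sum.union_disjoint) auto
  have K0: "sum p ?K \<ge> 0" using assms(10) by (simp add: sum_nonneg less_imp_le)
  have gK: "g * sum p ?K \<le> sum p ?K" using K0 assms(8,9) by (simp add: mult_left_le_one_le less_imp_le)
  have tx: "t*si/x \<le> t*si"
  proof -
    have "t*si \<ge> 0" using assms(5,6) by simp
    then have "t*si*1 \<le> t*si*x" using assms(7) by (intro mult_left_mono) auto
    then show ?thesis using assms(7) by (simp add: divide_le_eq)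
  qed
  have m: "w \<ge> 0" "g * sum p C + sum p H - w \<le> 2*t*si/x"
     "\<forall>k\<in>H. w < p k \<and> p k \<le> t*si/x" "\<forall>k\<in>C. p k \<le> t*si" "sum p H + sum p C \<le> 2*t*si"
    using assms(1) unfolding minv_def by auto
  have "g * sum p (C \<union> ?K) + sum p ?H' - w \<le> 2*t*si/x"
    using m(2) sH sC gK by (simp add: distrib_left)
  moreover have "sum p ?H' + sum p (C \<union> ?K) \<le> 2*t*si" using m(5) sH sC by simp
  moreover have "\<forall>k\<in>C \<union> ?K. p k \<le> t*si" using m(3,4) tx by fastforce
  ultimately show ?thesis using m(1,3) unfolding minv_def by auto
qed

lemma tx_le:
  fixes si t x :: real
  assumes "si > 0" "t \<ge> 0" "x \<ge> 1"
  shows "t*si/x \<le> t*si"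
proof -
  have "t*si \<ge> 0" using assms by (intro mult_nonneg_nonneg) auto
  then have "t*si*1 \<le> t*si*x" using assms(3) by (intro mult_left_mono) auto
  then show ?thesis using assms(3) by (simp add: divide_le_eq)
qed

lemma minv_raise:
  assumes "minv p g x si t H C w" "finite H" "finite C" "H \<inter> C = {}" "si > 0" "t \<ge> 0" "x \<ge> 1"
    "\<forall>k. p k > 0"
  shows "minv p g x si (x*t) (H \<union> C) {} 0"
proof -
  have m: "w \<ge> 0" "g * sum p C + sum p H - w \<le> 2*t*si/x"
     "\<forall>k\<in>H. w < p k \<and> p k \<le> t*si/x" "\<forall>k\<in>C. p k \<le> t*si" "sum p H + sum p C \<le> 2*t*si"
    using assms(1) unfolding minv_def by auto
  have e: "x*t*si/x = t*si" using assms(7) by simp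
  have e2: "2*(x*t)*si/x = 2*t*si" using assms(7) by simp
  have s: "sum p (H \<union> C) = sum p H + sum p C" using assms(2-4) by (simp add: sum.union_disjoint)
  have "2*t*si \<le> 2*(x*t)*si"
  proof -
    have "t*si*1 \<le> t*si*x" using assms(3-7) by (intro mult_left_mono) auto
    then show ?thesis by (simp add: algebra_simps)
  qed
  moreover have "\<forall>k\<in>H \<union> C. 0 < p k \<and> p k \<le> t*si" using m(3,4) tx_le[OF assms(5-7)] assms(8) by fastforce
  ultimately show ?thesis using m(5) s e e2 unfolding minv_def by auto
qed

lemma minv_place:
  assumes "minv p g x si t H C w" "finite H" "finite C" "H \<inter> C = {}" "si > 0" "t \<ge> 0"
    "0 < g" "g < 1" "\<forall>k. p k > 0" "x = 1/g + 1/2"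
    "j \<notin> H \<union> C" "p j \<le> t*si" "sum p C < t*si"
    "distinct xs" "set xs = H" "greedy p (g * p j + w) xs = (R, w')"
  shows "minv p g x si t (H - R) (insert j C) w'"
proof -
  have m: "w \<ge> 0" "g * sum p C + sum p H - w \<le> 2*t*si/x"
     "\<forall>k\<in>H. w < p k \<and> p k \<le> t*si/x" "\<forall>k\<in>C. p k \<le> t*si" "sum p H + sum p C \<le> 2*t*si"
    using assms(1) unfolding minv_def by auto
  have G: "R \<subseteq> H" "sum p R + w' = g * p j + w" "w' \<ge> 0" "\<forall>k \<in> H - R. w' < p k"
    using greedy_props[OF assms(9,14,16)] assms(15) m(1) assms(7,9)
    by (auto simp: less_imp_le)
  have sH: "sum p (H - R) = sum p H - sum p R" using G(1) assms(2) by (simp add: sum_diff)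
  have sC: "sum p (insert j C) = sum p C + p j" using assms(3,11) by simp
  have P2: "g * sum p (insert j C) + sum p (H - R) - w' \<le> 2*t*si/x"
    using m(2) sH sC G(2) by (simp add: distrib_left)
  have x0: "x > 0" using assms(7,10) by (simp add: add_pos_pos)
  have gx: "(2+g) * (t*si/x) = 2*g*(t*si)"
  proof -
    have "x*(2*g) = 2+g" using assms(7,10) by (simp add: field_simps)
    then have "(2+g) * (t*si/x) = (x*(2*g))*(t*si/x)" by simp
    also have "\<dots> = 2*g*(t*si)" using x0 by (simp add: field_simps)
    finally show ?thesis .
  qed
  have P4: "sum p (H - R) + sum p (insert j C) \<le> 2*t*si"
  proof (cases "H - R = {}")
    case True
    then have "sum p (H - R) = 0" by (metis sum.empty)
    then show ?thesis using sC assms(12,13) by simp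
  next
    case False
    then obtain k where k: "k \<in> H - R" by auto
    have wk: "w' < p k" "p k \<le> t*si/x" using G(4) k m(3) by auto
    have "p k \<le> sum p (H - R)"
      using k assms(2,9) by (intro member_le_sum) (auto simp: less_imp_le)
    then have A: "w' \<le> sum p (H - R)" using wk by simp
    let ?U = "t*si/x" let ?a = "sum p (H - R)" let ?c = "sum p (insert j C)"
    have b: "(1-g)*w' \<le> (1-g)*?a" using A assms(8) by (intro mult_left_mono) auto
    have "w' < ?U" using wk by linarith
    then have c: "g*w' < g*?U" using assms(7) by (intro mult_strict_left_mono) auto
    define U where "U = t*si/x"
    have P2': "g*?c + ?a - w' \<le> 2*U" using P2 unfolding U_def by simp
    have "(2+g)*U = 2*g*(t*si)" using gx unfolding U_def .
    then have gx': "2*U + g*U = 2*g*(t*si)" by (metis distrib_right)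
    have c': "g*w' < g*U" using c unfolding U_def .
    have b': "w' - g*w' \<le> ?a - g*?a" using b by (simp add: algebra_simps)
    have "g*?a + g*?c < 2*g*(t*si)" using P2' gx' c' b' by linarith
    then have "g*(?a + ?c) < g*(2*t*si)" by (simp add: algebra_simps)
    then show ?thesis using assms(7) by simp
  qed
  have "\<forall>k\<in>insert j C. p k \<le> t*si" using m(4) assms(12) by auto
  then show ?thesis unfolding minv_def using G(3,4) m(3) P2 P4 by auto
qed

lemma xfacts:
  fixes g x :: real
  assumes "0 < g" "g < 1" "x = 1/g + 1/2"
  shows "x \<ge> 1" "x > 0" "g * x \<le> 2"
proof -
  have "1/g > 1" using assms(1,2) by (simp add: field_simps)
  then show "x \<ge> 1" using assms(3) by simp
  then show "x > 0" by simp
  have "g * x = 1 + g/2" using assms(1,3) by (simp add: field_simps)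
  then show "g * x \<le> 2" using assms(2) by simp
qed

definition ginv :: "nat \<Rightarrow> (nat \<Rightarrow> real) \<Rightarrow> (nat \<Rightarrow> real) \<Rightarrow> real \<Rightarrow> real \<Rightarrow> st \<Rightarrow> bool" where
  "ginv m s p g x \<sigma> \<longleftrightarrow> T \<sigma> \<ge> 0
    \<and> (\<forall>a. finite (hatJ \<sigma> a) \<and> finite (chkJ \<sigma> a) \<and> hatJ \<sigma> a \<inter> chkJ \<sigma> a = {}
         \<and> (hatJ \<sigma> a \<union> chkJ \<sigma> a) \<inter> queue \<sigma> = {} \<and> hatJ \<sigma> a \<union> chkJ \<sigma> a \<subseteq> arrived \<sigma>)
    \<and> (\<forall>a b. a \<noteq> b \<longrightarrow> (hatJ \<sigma> a \<union> chkJ \<sigma> a) \<inter> (hatJ \<sigma> b \<union> chkJ \<sigma> b) = {})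
    \<and> queue \<sigma> \<subseteq> arrived \<sigma>
    \<and> (\<forall>j. ph \<sigma> = Search j \<longrightarrow> (\<forall>a. j \<notin> hatJ \<sigma> a \<union> chkJ \<sigma> a) \<and> j \<notin> queue \<sigma> \<and> j \<in> arrived \<sigma>)
    \<and> (\<forall>j i. ph \<sigma> = Place j i \<longrightarrow> (\<forall>a. j \<notin> hatJ \<sigma> a \<union> chkJ \<sigma> a) \<and> j \<notin> queue \<sigma> \<and> j \<in> arrived \<sigma>
          \<and> i < m \<and> p j \<le> T \<sigma> * s i \<and> sum p (chkJ \<sigma> i) < T \<sigma> * s i)
    \<and> (\<forall>i<m. minv p g x (s i) (T \<sigma>) (hatJ \<sigma> i) (chkJ \<sigma> i) (pot \<sigma> i))"

lemma reach_ginv: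
  assumes m1: "m \<ge> 1" and S: "\<forall>i<m. s i > 0" and P: "\<forall>j. p j > 0"
    and g0: "0 < g" and g1: "g < 1" and xd: "x = 1/g + 1/2"
  shows "reach m s p 1 g x \<sigma> \<Longrightarrow> ginv m s p g x \<sigma>"
proof (induction rule: reach.induct)
  case init
  show ?case by (simp add: init_st_def ginv_def minv_def)
next
  case (first \<sigma> j)
  note x1 = xfacts(1)[OF g0 g1 xd] and x0 = xfacts(2)[OF g0 g1 xd] and gx = xfacts(3)[OF g0 g1 xd]
  have G: "ginv m s p g x \<sigma>" by fact
  then have E: "hatJ \<sigma> a = {}" "chkJ \<sigma> a = {}" "queue \<sigma> = {}" for a
    using first.hyps(2) unfolding ginv_def by blast+
  have s0: "s 0 > 0" using S m1 by auto
  have pj: "p j > 0" using P by auto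
  have T0: "p j / s 0 * s 0 = p j" using s0 by simp
  have mi: "minv p g x (s i) (p j / s 0) {} (if i = 0 then {j} else {}) (pot \<sigma> i)"
    if "i < m" for i
  proof -
    have w: "pot \<sigma> i \<ge> 0" using G that unfolding ginv_def minv_def by blast
    have si: "s i > 0" using S that by auto
    have nn: "0 \<le> 2 * (p j / s 0) * s i / x" using pj s0 si x0 by simp
    show ?thesis
    proof (cases "i = 0")
      case True
      have "g * p j * x \<le> 2 * p j" using gx pj by (metis mult.commute mult.left_commute mult_le_cancel_left_pos)
      then have "g * p j \<le> 2 * p j / x" using x0 by (simp add: le_divide_eq)
      then show ?thesis using True E w T0 pj unfolding minv_def by auto
    next
      case False
      have nn2: "0 \<le> 2 * (p j / s 0) * s i" using pj s0 si by simp
      show ?thesis using False E w nn nn2 unfolding minv_def by simp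
    qed
  qed
  have mi0: "minv p g x (s 0) (p j / s 0) {} {j} (pot \<sigma> 0)" using mi[of 0] m1 by simp
  have mi1: "minv p g x (s i) (p j / s 0) {} {} (pot \<sigma> i)" if "i < m" "i \<noteq> 0" for i
    using mi[of i] that by simp
  show ?case unfolding ginv_def using E mi0 mi1 pj s0 first.hyps(3) by (auto simp: less_imp_le)
next
  case (arrive \<sigma> j)
  then show ?case unfolding ginv_def by auto
next
  case (pop \<sigma> j)
  then show ?case unfolding ginv_def by auto
next
  case (move \<sigma> j i)
  note x1 = xfacts(1)[OF g0 g1 xd]
  have G: "ginv m s p g x \<sigma>" by fact
  have im: "i < m" "p j / s i \<le> T \<sigma>" using move.hyps(3) unfolding Mt_def eligible_def by auto
  have si: "s i > 0" using S im by auto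
  define \<sigma>1 where "\<sigma>1 = move_step p 1 \<sigma> j i"
  define K where "K = {k\<in>hatJ \<sigma> i. p j \<le> p k}"
  have h1: "hatJ \<sigma>1 = (hatJ \<sigma>)(i := {k\<in>hatJ \<sigma> i. \<not> p j \<le> p k})"
    and c1: "chkJ \<sigma>1 = (chkJ \<sigma>)(i := chkJ \<sigma> i \<union> K)"
    and o1: "T \<sigma>1 = T \<sigma>" "pot \<sigma>1 = pot \<sigma>" "queue \<sigma>1 = queue \<sigma>" "arrived \<sigma>1 = arrived \<sigma>" "ph \<sigma>1 = ph \<sigma>"
    unfolding \<sigma>1_def move_step_def K_def by auto
  have U: "hatJ \<sigma>1 a \<union> chkJ \<sigma>1 a = hatJ \<sigma> a \<union> chkJ \<sigma> a" for a
    unfolding h1 c1 K_def by auto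
  have fin: "finite (hatJ \<sigma>1 a) \<and> finite (chkJ \<sigma>1 a)" for a
    using G unfolding ginv_def h1 c1 K_def by auto
  have dis: "hatJ \<sigma>1 a \<inter> chkJ \<sigma>1 a = {}" for a
    using G unfolding ginv_def h1 c1 K_def by auto
  have mi: "minv p g x (s a) (T \<sigma>1) (hatJ \<sigma>1 a) (chkJ \<sigma>1 a) (pot \<sigma>1 a)" if "a < m" for a
  proof (cases "a = i")
    case True
    have "minv p g x (s i) (T \<sigma>) (hatJ \<sigma> i) (chkJ \<sigma> i) (pot \<sigma> i)" using G im unfolding ginv_def by blast
    moreover have "finite (hatJ \<sigma> i)" "finite (chkJ \<sigma> i)" "hatJ \<sigma> i \<inter> chkJ \<sigma> i = {}" "T \<sigma> \<ge> 0"
      using G unfolding ginv_def by auto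
    ultimately have "minv p g x (s i) (T \<sigma>) {k\<in>hatJ \<sigma> i. \<not> p j \<le> p k} (chkJ \<sigma> i \<union> {k\<in>hatJ \<sigma> i. p j \<le> p k}) (pot \<sigma> i)"
      using minv_move si x1 g0 g1 P by blast
    then show ?thesis using True unfolding h1 c1 o1 K_def by simp
  next
    case False
    then show ?thesis using G that unfolding ginv_def h1 c1 o1 by simp
  qed
  have G1: "ginv m s p g x \<sigma>1"
    unfolding ginv_def U using G fin dis mi move.hyps(2) unfolding ginv_def o1 by auto
  show ?case
  proof (cases "saturated s p \<sigma>1 i")
    case True
    then show ?thesis using G1 unfolding \<sigma>1_def by simp
  next
    case False
    then have "sum p (chkJ \<sigma>1 i) < T \<sigma>1 * s i" unfolding saturated_def new_load_def using si
      by (simp add: le_divide_eq)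
    moreover have "p j \<le> T \<sigma>1 * s i" using im si o1 by (simp add: divide_le_eq)
    ultimately have "ginv m s p g x (\<sigma>1\<lparr>ph := Place j i\<rparr>)"
      using G1 im move.hyps(2) unfolding ginv_def by (auto simp: o1)
    then show ?thesis using False unfolding \<sigma>1_def by simp
  qed
next
  case (raise \<sigma> j)
  note x1 = xfacts(1)[OF g0 g1 xd]
  have G: "ginv m s p g x \<sigma>" by fact
  have mi: "minv p g x (s a) (x * T \<sigma>) (hatJ \<sigma> a \<union> chkJ \<sigma> a) {} 0" if "a < m" for a
  proof -
    have "minv p g x (s a) (T \<sigma>) (hatJ \<sigma> a) (chkJ \<sigma> a) (pot \<sigma> a)" using G that unfolding ginv_def by blast
    moreover have "finite (hatJ \<sigma> a)" "finite (chkJ \<sigma> a)" "hatJ \<sigma> a \<inter> chkJ \<sigma> a = {}" "T \<sigma> \<ge> 0"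
      using G unfolding ginv_def by auto
    moreover have "s a > 0" using S that by auto
    ultimately show ?thesis using minv_raise x1 P by blast
  qed
  have "x * T \<sigma> \<ge> 0" using G x1 unfolding ginv_def by simp
  then show ?case using G mi raise.hyps(2) unfolding ginv_def by auto
next
  case (place \<sigma> j i xs R w')
  have G: "ginv m s p g x \<sigma>" by fact
  have pl: "\<forall>a. j \<notin> hatJ \<sigma> a \<union> chkJ \<sigma> a" "j \<notin> queue \<sigma>" "j \<in> arrived \<sigma>"
     "i < m" "p j \<le> T \<sigma> * s i" "sum p (chkJ \<sigma> i) < T \<sigma> * s i"
    using G place.hyps(2) unfolding ginv_def by blast+
  have fa: "finite (hatJ \<sigma> a)" "finite (chkJ \<sigma> a)" "hatJ \<sigma> a \<inter> chkJ \<sigma> a = {}"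
     "(hatJ \<sigma> a \<union> chkJ \<sigma> a) \<inter> queue \<sigma> = {}" "hatJ \<sigma> a \<union> chkJ \<sigma> a \<subseteq> arrived \<sigma>" for a
    using G unfolding ginv_def by blast+
  have dj: "a \<noteq> b \<Longrightarrow> (hatJ \<sigma> a \<union> chkJ \<sigma> a) \<inter> (hatJ \<sigma> b \<union> chkJ \<sigma> b) = {}" for a b
    using G unfolding ginv_def by blast
  have q: "queue \<sigma> \<subseteq> arrived \<sigma>" "T \<sigma> \<ge> 0" using G unfolding ginv_def by blast+
  have si: "s i > 0" using S pl(4) by auto
  have w0: "pot \<sigma> i \<ge> 0" using G pl(4) unfolding ginv_def minv_def by blast
  have RH: "R \<subseteq> hatJ \<sigma> i"
    using greedy_props[OF P place.hyps(3,6)] place.hyps(4) by blast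
  have mi_i: "minv p g x (s i) (T \<sigma>) (hatJ \<sigma> i - R) (insert j (chkJ \<sigma> i)) w'"
  proof (rule minv_place[OF _ fa(1,2,3) si q(2) g0 g1 P xd _ pl(5,6) place.hyps(3,4,6)])
    show "minv p g x (s i) (T \<sigma>) (hatJ \<sigma> i) (chkJ \<sigma> i) (pot \<sigma> i)" using G pl(4) unfolding ginv_def by blast
    show "j \<notin> hatJ \<sigma> i \<union> chkJ \<sigma> i" using pl(1) by blast
  qed
  have mi: "minv p g x (s a) (T \<sigma>) (((hatJ \<sigma>)(i := hatJ \<sigma> i - R)) a) (((chkJ \<sigma>)(i := insert j (chkJ \<sigma> i))) a) (((pot \<sigma>)(i := w')) a)"
    if "a < m" for a
    using mi_i G that unfolding ginv_def by (cases "a = i") auto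
  have U: "((hatJ \<sigma>)(i := hatJ \<sigma> i - R)) a \<union> ((chkJ \<sigma>)(i := insert j (chkJ \<sigma> i))) a
      \<subseteq> hatJ \<sigma> a \<union> chkJ \<sigma> a \<union> (if a = i then {j} else {})" for a
    by auto
  have A1: "\<forall>a. finite (((hatJ \<sigma>)(i := hatJ \<sigma> i - R)) a) \<and> finite (((chkJ \<sigma>)(i := insert j (chkJ \<sigma> i))) a)
     \<and> ((hatJ \<sigma>)(i := hatJ \<sigma> i - R)) a \<inter> ((chkJ \<sigma>)(i := insert j (chkJ \<sigma> i))) a = {}
     \<and> (((hatJ \<sigma>)(i := hatJ \<sigma> i - R)) a \<union> ((chkJ \<sigma>)(i := insert j (chkJ \<sigma> i))) a) \<inter> (queue \<sigma> \<union> R) = {}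
     \<and> ((hatJ \<sigma>)(i := hatJ \<sigma> i - R)) a \<union> ((chkJ \<sigma>)(i := insert j (chkJ \<sigma> i))) a \<subseteq> arrived \<sigma>"
  proof
    fix a
    show "finite (((hatJ \<sigma>)(i := hatJ \<sigma> i - R)) a) \<and> finite (((chkJ \<sigma>)(i := insert j (chkJ \<sigma> i))) a)
     \<and> ((hatJ \<sigma>)(i := hatJ \<sigma> i - R)) a \<inter> ((chkJ \<sigma>)(i := insert j (chkJ \<sigma> i))) a = {}
     \<and> (((hatJ \<sigma>)(i := hatJ \<sigma> i - R)) a \<union> ((chkJ \<sigma>)(i := insert j (chkJ \<sigma> i))) a) \<inter> (queue \<sigma> \<union> R) = {}
     \<and> ((hatJ \<sigma>)(i := hatJ \<sigma> i - R)) a \<union> ((chkJ \<sigma>)(i := insert j (chkJ \<sigma> i))) a \<subseteq> arrived \<sigma>"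
    proof (cases "a = i")
      case True
      then show ?thesis using fa[of i] pl(1-3) RH by auto
    next
      case False
      then show ?thesis using fa[of a] dj[of a i] RH by auto
    qed
  qed
  have A2: "\<forall>a b. a \<noteq> b \<longrightarrow> (((hatJ \<sigma>)(i := hatJ \<sigma> i - R)) a \<union> ((chkJ \<sigma>)(i := insert j (chkJ \<sigma> i))) a)
     \<inter> (((hatJ \<sigma>)(i := hatJ \<sigma> i - R)) b \<union> ((chkJ \<sigma>)(i := insert j (chkJ \<sigma> i))) b) = {}"
  proof (intro allI impI)
    fix a b :: nat assume ab: "a \<noteq> b"
    have "(hatJ \<sigma> a \<union> chkJ \<sigma> a \<union> (if a = i then {j} else {})) \<inter>
          (hatJ \<sigma> b \<union> chkJ \<sigma> b \<union> (if b = i then {j} else {})) = {}"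
      using dj[OF ab] pl(1) ab by auto
    then show "(((hatJ \<sigma>)(i := hatJ \<sigma> i - R)) a \<union> ((chkJ \<sigma>)(i := insert j (chkJ \<sigma> i))) a)
     \<inter> (((hatJ \<sigma>)(i := hatJ \<sigma> i - R)) b \<union> ((chkJ \<sigma>)(i := insert j (chkJ \<sigma> i))) b) = {}"
      using U[of a] U[of b] by blast
  qed
  have A3: "queue \<sigma> \<union> R \<subseteq> arrived \<sigma>" using q(1) RH fa(5)[of i] by blast
  show ?case unfolding ginv_def using q(2) A1 A2 A3 mi by simp
qed

theorem lemma4:
  fixes m :: nat and s p :: "nat \<Rightarrow> real" and gamma :: real and \<sigma> :: st and i :: nat
  assumes "m \<ge> 1"
    and "\<forall>i<m. s i > 0"
    and "\<forall>i j. i \<le> j \<and> j < m \<longrightarrow> s j \<le> s i"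
    and "\<forall>j. p j > 0"
    and "0 < gamma" and "gamma < 1"
    and "reach m s p 1 gamma (1 / gamma + 1 / 2) \<sigma>"
    and "i < m"
  shows "total_load s p \<sigma> i \<le> (1 + 1) * T \<sigma>"
proof -
  have G: "ginv m s p gamma (1 / gamma + 1 / 2) \<sigma>"
    using reach_ginv[OF assms(1,2,4,5,6) refl assms(7)] .
  have f: "finite (hatJ \<sigma> i)" "finite (chkJ \<sigma> i)" "hatJ \<sigma> i \<inter> chkJ \<sigma> i = {}"
    using G unfolding ginv_def by blast+
  have "sum p (hatJ \<sigma> i) + sum p (chkJ \<sigma> i) \<le> 2 * T \<sigma> * s i"
    using G assms(8) unfolding ginv_def minv_def by blast
  then have "sum p (hatJ \<sigma> i \<union> chkJ \<sigma> i) \<le> 2 * T \<sigma> * s i"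
    using f by (simp add: sum.union_disjoint)
  moreover have "s i > 0" using assms(2,8) by auto
  ultimately show ?thesis unfolding total_load_def by (simp add: divide_le_eq)
qed

end
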